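(* Let $r\geq1$, let $\mathbf a=(a_1,\ldots,a_r)$ be positive integers, let $D$ be a positive common multiple of $a_1,\ldots,a_r$, and let $j\geq 1$ be an integer dividing $a_i$ for some $1\leq i\leq r$; put $\rho_j=e^{2\pi i/j}$. Then for all $n\ge 0$, $$ W_{j}(n,\mathbf a) = \frac{\rho_j^{-n}}{D(r-1)!} \sum_{m=1}^r \sum_{\ell=1}^{j} \rho_j^{\ell} \sum_{k=m-1}^{r-1} s(r,k)\, (-1)^{k-m+1} \binom{k}{m-1} \sum_{\substack{0\leq j_1\leq \frac{D}{a_1}-1,\ldots, 0\leq j_r\leq \frac{D}{a_r}-1 \\ a_1j_1+\cdots+a_rj_r \equiv \ell \pmod j}} D^{-k} (a_1j_1+\cdots+a_rj_r)^{k-m+1}\, n^{m-1}.$$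
   Context: $p_{\mathbf a}(n)$ is the number of integer solutions $(x_1,\ldots,x_r)$ of $a_1x_1+\cdots+a_rx_r=n$ with all $x_i\geq 0$. There are unique polynomials $P_\lambda$, indexed by the $D$-th roots of unity $\lambda$, with $p_{\mathbf a}(n)=\sum_{\lambda^D=1}P_\lambda(n)\lambda^{-n}$ for all $n\geq 0$; the Sylvester wave is $W_j(n,\mathbf a)=P_{\rho_j}(n)\rho_j^{-n}$. Here $s(r,k)$ denotes the coefficient of $x^k$ in $(x+1)(x+2)\cdots(x+r-1)$ (i.e. the unsigned Stirling number of the first kind $\left[{r\atop k+1}\right]$), the inner sum is over integer tuples, and $0^0=1$. *)

theory Defs
  imports Complex_Main "HOL-Computational_Algebra.Polynomial"
begin

text \<open>The weight vector a = (a_1,...,a_r) is a list (0-indexed), r = length a.\<close>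

definition restricted_partition :: "nat list \<Rightarrow> nat \<Rightarrow> nat" where
  "restricted_partition a n =
     card {x :: nat list. length x = length a \<and> (\<Sum>i<length a. a ! i * x ! i) = n}"

text \<open>By convention P_z = 0 for z not a D-th root of unity (makes the family unique).\<close>

definition sylvester_polys :: "nat list \<Rightarrow> nat \<Rightarrow> complex \<Rightarrow> complex poly" where
  "sylvester_polys a D = (THE P. (\<forall>z. z ^ D \<noteq> 1 \<longrightarrow> P z = 0) \<and>
      (\<forall>n. of_nat (restricted_partition a n) =
           (\<Sum>z\<in>{z::complex. z ^ D = 1}. poly (P z) (of_nat n) * inverse z ^ n)))"

definition rho :: "nat \<Rightarrow> complex" where
  "rho j = exp (2 * of_real pi * \<i> / of_nat j)"

definition sylvester_wave :: "nat list \<Rightarrow> nat \<Rightarrow> nat \<Rightarrow> nat \<Rightarrow> complex" where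
  "sylvester_wave a D j n = poly (sylvester_polys a D (rho j)) (of_nat n) * inverse (rho j) ^ n"

definition stirl :: "nat \<Rightarrow> nat \<Rightarrow> int" where
  "stirl r k = coeff (\<Prod>i\<in>{1..<r}. [:int i, 1:]) k"

definition wave_tuples :: "nat list \<Rightarrow> nat \<Rightarrow> nat \<Rightarrow> nat \<Rightarrow> nat list set" where
  "wave_tuples a D j l = {js. length js = length a \<and> (\<forall>i<length a. js ! i < D div a ! i) \<and>
      (\<Sum>i<length a. a ! i * js ! i) mod j = l mod j}"

end

theory Submission
  imports Defs
begin

definition wsum :: "nat list \<Rightarrow> nat list \<Rightarrow> nat" where
  "wsum a js = (\<Sum>i<length a. a!i * js!i)"
definition tups :: "nat list \<Rightarrow> nat \<Rightarrow> nat list set" where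
  "tups a D = {js. length js = length a \<and> (\<forall>i<length a. js!i < D div a!i)}"
definition bset :: "nat list \<Rightarrow> nat \<Rightarrow> nat list \<Rightarrow> nat \<Rightarrow> nat list set" where
  "bset a D js n = {q. length q = length a \<and> wsum a js + D * sum_list q = n}"

lemma count:
  assumes pos: "\<forall>x\<in>set a. x > 0" and dv: "\<forall>x\<in>set a. x dvd D" and D: "D > 0"
  shows "card {x. length x = length a \<and> wsum a x = n} = (\<Sum>js\<in>tups a D. card (bset a D js n))"
proof -
  define r where "r = length a"
  define d where "d i = D div a!i" for i
  have ad: "a!i * d i = D" if "i < r" for i
    using dv that unfolding d_def r_def by (simp add: dvd_mult_div_cancel)
  have dpos: "d i > 0" if "i < r" for i
    using ad[OF that] D by (cases "d i") auto
  define X where "X = {x. length x = r \<and> wsum a x = n}"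
  define \<Psi> where "\<Psi> x = (map (\<lambda>i. x!i mod d i) [0..<r], map (\<lambda>i. x!i div d i) [0..<r])" for x
  have finT: "finite (tups a D)"
  proof (rule finite_subset)
    show "tups a D \<subseteq> {xs. set xs \<subseteq> {..<D} \<and> length xs = length a}"
    proof
      fix js assume js: "js \<in> tups a D"
      have "set js \<subseteq> {..<D}"
      proof
        fix x assume "x \<in> set js"
        then obtain i where i: "i < length a" "x = js!i" using js by (auto simp: tups_def in_set_conv_nth)
        have "x < D div a!i" using js i by (auto simp: tups_def)
        also have "\<dots> \<le> D" by (rule div_le_dividend)
        finally show "x \<in> {..<D}" by simp
      qed
      thus "js \<in> {xs. set xs \<subseteq> {..<D} \<and> length xs = length a}" using js by (simp add: tups_def)
    qed
  qed (rule finite_lists_length_eq, simp)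
  have finB: "finite (bset a D js n)" for js
  proof (rule finite_subset)
    show "bset a D js n \<subseteq> {xs. set xs \<subseteq> {..n} \<and> length xs = length a}"
    proof
      fix q assume q: "q \<in> bset a D js n"
      have "set q \<subseteq> {..n}"
      proof
        fix x assume x: "x \<in> set q"
        have "x \<le> sum_list q" using x by (simp add: member_le_sum_list)
        also have "\<dots> \<le> D * sum_list q" using D by simp
        also have "\<dots> \<le> n" using q by (auto simp: bset_def)
        finally show "x \<in> {..n}" by simp
      qed
      thus "q \<in> {xs. set xs \<subseteq> {..n} \<and> length xs = length a}" using q by (simp add: bset_def)
    qed
  qed (rule finite_lists_length_eq, simp)
  have key: "wsum a (map (\<lambda>i. js!i + d i * q!i) [0..<r]) = wsum a js + D * sum_list q"
    if "length js = r" "length q = r" for js q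
  proof -
    have "wsum a (map (\<lambda>i. js!i + d i * q!i) [0..<r]) = (\<Sum>i<r. a!i * js!i + (a!i * d i) * q!i)"
      unfolding wsum_def r_def[symmetric] by (intro sum.cong refl) (simp add: algebra_simps)
    also have "\<dots> = (\<Sum>i<r. a!i * js!i + D * q!i)" by (intro sum.cong refl) (simp add: ad)
    also have "\<dots> = wsum a js + D * sum_list q"
      using that by (simp add: sum.distrib wsum_def r_def sum_distrib_left sum_list_sum_nth atLeast0LessThan)
    finally show ?thesis .
  qed
  have bij: "bij_betw \<Psi> X (Sigma (tups a D) (\<lambda>js. bset a D js n))"
    unfolding bij_betw_def
  proof
    show "inj_on \<Psi> X"
    proof (rule inj_onI)
      fix x y assume x: "x \<in> X" and y: "y \<in> X" and e: "\<Psi> x = \<Psi> y"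
      show "x = y"
      proof (rule nth_equalityI)
        show "length x = length y" using x y by (simp add: X_def)
        fix i assume i: "i < length x"
        hence ir: "i < r" using x by (simp add: X_def)
        have "x!i mod d i = y!i mod d i" "x!i div d i = y!i div d i"
          using e ir unfolding \<Psi>_def by (metis (no_types, lifting) diff_zero length_map length_upt nth_map nth_upt plus_nat.add_0 prod.inject)+
        thus "x!i = y!i" by (metis div_mult_mod_eq)
      qed
    qed
  next
    show "\<Psi> ` X = Sigma (tups a D) (\<lambda>js. bset a D js n)"
    proof (intro equalityI subsetI)
      fix y assume "y \<in> \<Psi> ` X"
      then obtain x where x: "x \<in> X" and yx: "y = \<Psi> x" by blast
      have lx: "length x = r" using x by (simp add: X_def)
      let ?js = "map (\<lambda>i. x!i mod d i) [0..<r]" and ?q = "map (\<lambda>i. x!i div d i) [0..<r]"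
      have 1: "fst (\<Psi> x) \<in> tups a D" using dpos by (simp add: \<Psi>_def tups_def r_def[symmetric] d_def)
      have "x = map (\<lambda>i. ?js!i + d i * ?q!i) [0..<r]"
        using lx by (intro nth_equalityI) (auto simp: mult.commute)
      hence "wsum a x = wsum a ?js + D * sum_list ?q" using key[of ?js ?q] by simp
      hence "snd (\<Psi> x) \<in> bset a D (fst (\<Psi> x)) n" using x by (simp add: \<Psi>_def bset_def r_def X_def)
      thus "y \<in> Sigma (tups a D) (\<lambda>js. bset a D js n)" using 1 yx by (metis SigmaI prod.collapse)
    next
      fix y assume "y \<in> Sigma (tups a D) (\<lambda>js. bset a D js n)"
      then obtain js q where js: "js \<in> tups a D" and q: "q \<in> bset a D js n" and yj: "y = (js, q)" by blast
      have ljs: "length js = r" and lq: "length q = r" using js q by (auto simp: tups_def bset_def r_def)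
      have lt: "js!i < d i" if "i < r" for i using js that by (simp add: tups_def d_def r_def)
      define x where "x = map (\<lambda>i. js!i + d i * q!i) [0..<r]"
      have "x \<in> X" using key[OF ljs lq] q by (simp add: X_def x_def bset_def)
      moreover have "\<Psi> x = (js, q)"
        unfolding \<Psi>_def x_def using ljs lq lt dpos
        by (auto intro!: nth_equalityI)
      ultimately show "y \<in> \<Psi> ` X" unfolding yj by (metis image_eqI)
    qed
  qed
  have "card X = card (Sigma (tups a D) (\<lambda>js. bset a D js n))" using bij by (rule bij_betw_same_card)
  also have "\<dots> = (\<Sum>js\<in>tups a D. card (bset a D js n))" using finT finB by simp
  finally show ?thesis by (simp add: X_def r_def)
qed


lemma card_bset:
  assumes D: "D > 0"
  shows "card (bset a D js n) = (if wsum a js \<le> n \<and> D dvd (n - wsum a js)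
     then ((n - wsum a js) div D + length a - 1 choose ((n - wsum a js) div D)) else 0)"
proof (cases "wsum a js \<le> n \<and> D dvd (n - wsum a js)")
  case True
  then obtain N where N: "n - wsum a js = D * N" by blast
  have "bset a D js n = {l. size l = length a \<and> sum_list l = N}"
    using True N D unfolding bset_def by auto
  thus ?thesis using True N D by (simp add: card_length_sum_list)
next
  case False
  have "bset a D js n = {}" using False unfolding bset_def by auto
  thus ?thesis using False by (subst if_not_P) auto
qed

definition Pr :: "nat \<Rightarrow> complex poly" where
  "Pr r = (\<Prod>i\<in>{1..<r}. [:of_nat i, 1:])"

lemma poly_Pr: "poly (Pr r) y = (\<Prod>i\<in>{1..<r}. of_nat i + y)"
  by (simp add: Pr_def poly_prod)

lemma binom_prod: "(N + m choose m) * fact m = (\<Prod>i\<in>{1..m}. i + N)"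
proof (induction m)
  case 0 thus ?case by simp
next
  case (Suc m)
  have "(N + Suc m choose Suc m) * fact (Suc m) = ((Suc (N+m) choose Suc m) * Suc m) * fact m"
    by (simp add: algebra_simps)
  also have "\<dots> = Suc (N+m) * ((N + m choose m) * fact m)"
    by (subst Suc_times_binomial_eq[symmetric]) (simp add: algebra_simps)
  also have "\<dots> = (\<Prod>i\<in>{1..Suc m}. i + N)" using Suc by (simp add: algebra_simps)
  finally show ?case .
qed

lemma binom_poly:
  assumes "r \<ge> 1"
  shows "(of_nat (N + r - 1 choose N) :: complex) = poly (Pr r) (of_nat N) / fact (r - 1)"
proof -
  have "N + r - 1 choose N = N + (r-1) choose (r-1)"
    using assms by (metis Nat.add_diff_assoc binomial_symmetric diff_add_inverse le_add1)
  hence "(of_nat (N + r - 1 choose N) :: complex) * fact (r-1) = of_nat ((N + (r-1) choose (r-1)) * fact (r-1))"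
    by simp
  also have "\<dots> = of_nat (\<Prod>i\<in>{1..r-1}. i + N)" by (simp only: binom_prod)
  also have "\<dots> = (\<Prod>i\<in>{1..<r}. of_nat i + of_nat N)"
    using assms by (simp add: atLeastLessThanSuc_atLeastAtMost[symmetric])
  finally show ?thesis by (simp add: poly_Pr field_simps)
qed

lemma term_eq:
  assumes D: "D > 0" and r: "r \<ge> 1" and s: "s < r * D"
  shows "(of_nat (if s \<le> n \<and> D dvd (n - s) then ((n-s) div D + r - 1 choose ((n-s) div D)) else 0) :: complex)
    = (if D dvd (s + (D-1)*n) then of_nat D else 0) * poly (Pr r) ((of_nat n - of_nat s)/of_nat D) / (of_nat D * fact (r-1))"
proof (cases "s \<le> n")
  case True
  have e: "s + (D-1)*n + (n - s) = D*n" using True D by (cases D) (auto simp: algebra_simps)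
  have iff: "D dvd (s + (D-1)*n) \<longleftrightarrow> D dvd (n - s)"
    by (metis e dvd_add_right_iff dvd_add_left_iff dvd_triv_left)
  show ?thesis
  proof (cases "D dvd (n - s)")
    case True2: True
    then obtain N where N: "n - s = D * N" by blast
    have "(of_nat n - of_nat s) / of_nat D = (of_nat N :: complex)"
      using N True D by (simp add: field_simps of_nat_diff[symmetric] del: of_nat_diff)
    thus ?thesis using True True2 iff N D binom_poly[OF r, of N] by simp
  next
    case False
    thus ?thesis using iff by simp
  qed
next
  case False
  have e: "s + (D-1)*n = (s - n) + D*n" using False D by (cases D) (auto simp: algebra_simps)
  have iff: "D dvd (s + (D-1)*n) \<longleftrightarrow> D dvd (s - n)"
    unfolding e by (simp add: dvd_add_left_iff)
  show ?thesis
  proof (cases "D dvd (s - n)")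
    case True
    then obtain t where t: "s - n = D * t" by blast
    have t1: "t \<ge> 1" using t False by (cases t) auto
    have "D * t < D * r" using t s by (metis diff_le_self le_less_trans mult.commute)
    hence tr: "t < r" using D by simp
    have "(of_nat n - of_nat s) / of_nat D = - (of_nat t :: complex)"
    proof -
      have "of_nat s - of_nat n = (of_nat D * of_nat t :: complex)"
        using t False by (metis le_add_diff_inverse2 less_or_eq_imp_le not_le of_nat_add of_nat_mult add_diff_cancel_right')
      thus ?thesis using D by (simp add: field_simps)
    qed
    moreover have "poly (Pr r) (- of_nat t) = 0"
      unfolding poly_Pr using t1 tr by (intro prod_zero) (auto intro!: bexI[of _ t])
    ultimately show ?thesis using False by simp
  next
    case False2: False
    thus ?thesis using iff False by simp
  qed
qed

lemma uniq_aux: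
  fixes Q :: "complex \<Rightarrow> complex poly"
  assumes D: "D > 0"
    and h0: "\<And>n. (\<Sum>z\<in>{z. z^D = 1}. poly (Q z) (of_nat n) * inverse z ^ n) = 0"
    and w: "w ^ D = 1"
  shows "Q w = 0"
proof -
  define U where "U = {z::complex. z^D = 1}"
  have finU: "finite U" unfolding U_def using D by (intro finite_roots_unity) auto
  have nz: "z \<noteq> 0" if "z \<in> U" for z using that D unfolding U_def by (auto simp: power_0_left)
  define S where "S t = (\<Sum>z\<in>U. smult (inverse z ^ t) (Q z))" for t
  have S0: "S t = 0" for t
  proof (rule ccontr)
    assume ne: "S t \<noteq> 0"
    have "poly (S t) (of_nat (D*m + t)) = 0" for m
    proof -
      have "poly (S t) (of_nat (D*m + t)) = (\<Sum>z\<in>U. poly (Q z) (of_nat (D*m+t)) * inverse z ^ (D*m+t))"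
      proof (unfold S_def poly_sum poly_smult, intro sum.cong refl)
        fix z assume "z \<in> U"
        hence "z^D = 1" by (simp add: U_def)
        hence "inverse z ^ (D*m+t) = inverse z ^ t"
          by (simp add: power_add power_mult power_inverse)
        thus "inverse z ^ t * poly (Q z) (of_nat (D * m + t)) =
          poly (Q z) (of_nat (D * m + t)) * inverse z ^ (D * m + t)" by simp
      qed
      also have "\<dots> = 0" using h0 unfolding U_def .
      finally show ?thesis .
    qed
    hence "range (\<lambda>m. of_nat (D*m + t) :: complex) \<subseteq> {x. poly (S t) x = 0}" by auto
    moreover have "finite {x. poly (S t) x = 0}" using ne by (rule poly_roots_finite)
    ultimately have "finite (range (\<lambda>m. of_nat (D*m + t) :: complex))" by (rule finite_subset)
    moreover have "inj (\<lambda>m. of_nat (D*m + t) :: complex)"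
      using D by (auto simp: inj_def)
    ultimately have "finite (UNIV :: nat set)" using finite_imageD by blast
    thus False by simp
  qed
  have geo: "(\<Sum>t<D. (w * inverse z)^t) = (if z = w then of_nat D else 0)" if "z \<in> U" for z
  proof (cases "z = w")
    case True thus ?thesis using nz that by simp
  next
    case False
    have "w * inverse z \<noteq> 1" using False nz[OF that] by (metis divide_inverse divide_self_if eq_divide_eq mult.commute mult_1 right_inverse)
    moreover have "(w * inverse z)^D = 1" using w that by (simp add: U_def power_mult_distrib power_inverse)
    ultimately show ?thesis using False by (simp add: geometric_sum)
  qed
  have "poly (Q w) x = 0" for x
  proof -
    have "0 = (\<Sum>t<D. w^t * poly (S t) x)" by (simp add: S0)
    also have "\<dots> = (\<Sum>t<D. \<Sum>z\<in>U. (w * inverse z)^t * poly (Q z) x)"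
      by (simp add: S_def poly_sum sum_distrib_left power_mult_distrib mult.assoc)
    also have "\<dots> = (\<Sum>z\<in>U. (\<Sum>t<D. (w * inverse z)^t) * poly (Q z) x)"
      by (subst sum.swap) (simp add: sum_distrib_right)
    also have "\<dots> = (\<Sum>z\<in>U. (if z = w then of_nat D * poly (Q z) x else 0))"
      by (intro sum.cong refl) (simp add: geo)
    also have "\<dots> = of_nat D * poly (Q w) x" using finU w by (simp add: U_def)
    finally show ?thesis using D by simp
  qed
  thus ?thesis using poly_all_0_iff_0 by blast
qed

lemma uniq:
  fixes P P' :: "complex \<Rightarrow> complex poly"
  assumes D: "D > 0" and p0: "\<forall>z. z^D \<noteq> 1 \<longrightarrow> P z = 0" and p0': "\<forall>z. z^D \<noteq> 1 \<longrightarrow> P' z = 0"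
    and h: "\<And>n. (\<Sum>z\<in>{z. z^D = 1}. poly (P z) (of_nat n) * inverse z ^ n) =
                 (\<Sum>z\<in>{z. z^D = 1}. poly (P' z) (of_nat n) * inverse z ^ n)"
  shows "P = P'"
proof
  fix w
  show "P w = P' w"
  proof (cases "w^D = 1")
    case False thus ?thesis using p0 p0' by simp
  next
    case True
    have "(\<lambda>z. P z - P' z) w = 0"
    proof (rule uniq_aux[OF D _ True])
      fix n
      show "(\<Sum>z\<in>{z. z^D = 1}. poly (P z - P' z) (of_nat n) * inverse z ^ n) = 0"
        using h[of n] by (simp add: algebra_simps sum_subtractf)
    qed
    thus ?thesis by simp
  qed
qed


lemma rootsum:
  assumes "D > 0"
  shows "(\<Sum>z\<in>{z::complex. z^D = 1}. z^k) = (if D dvd k then of_nat D else 0)"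
proof -
  define \<omega> where "\<omega> = cis (2*pi/real D)"
  have "(\<Sum>z\<in>{z::complex. z^D = 1}. z^k) = (\<Sum>t<D. cis(2*pi*real t/real D)^k)"
    by (intro sum.reindex_bij_betw[symmetric] bij_betw_roots_unity) (use assms in auto)
  also have "\<dots> = (\<Sum>t<D. (\<omega>^k)^t)"
    by (intro sum.cong refl) (simp add: \<omega>_def DeMoivre mult_ac)
  finally have eq: "(\<Sum>z\<in>{z::complex. z^D = 1}. z^k) = (\<Sum>t<D. (\<omega>^k)^t)" .
  show ?thesis
  proof (cases "D dvd k")
    case True
    then obtain m where m: "k = D * m" by blast
    have "\<omega>^k = cis (2*pi* real m)" using assms by (simp add: \<omega>_def DeMoivre m field_simps)
    also have "\<dots> = 1" by (intro cis_multiple_2pi) auto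
    finally show ?thesis using True eq by simp
  next
    case False
    have ne: "\<omega>^k \<noteq> 1"
    proof
      assume "\<omega>^k = 1"
      hence "cis (2*pi*real k/real D) = 1" by (simp add: \<omega>_def DeMoivre mult_ac)
      hence "cos (2*pi*real k/real D) = 1" by (simp add: complex_eq_iff)
      then obtain m :: int where "2*pi*real k/real D = real_of_int m * 2 * pi"
        by (subst (asm) cos_one_2pi_int) blast
      hence "real k = real_of_int m * real D" using assms by (simp add: field_simps)
      hence "int k = m * int D" by (metis of_int_eq_iff of_int_mult of_int_of_nat_eq)
      hence "int D dvd int k" by simp
      thus False using False by simp
    qed
    have "(\<omega>^k)^D = (\<omega>^D)^k" by (simp add: power_mult[symmetric] mult.commute)
    also have "\<omega>^D = 1" using assms by (simp add: \<omega>_def DeMoivre)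
    finally have "(\<omega>^k)^D = 1" by simp
    with eq ne False show ?thesis by (simp add: geometric_sum)
  qed
qed

definition Qp :: "nat list \<Rightarrow> nat \<Rightarrow> complex \<Rightarrow> complex poly" where
  "Qp a D z = smult (1 / (of_nat D * fact (length a - 1)))
     (\<Sum>js\<in>tups a D. smult (z ^ wsum a js)
        (pcompose (Pr (length a)) [: - of_nat (wsum a js) / of_nat D, 1 / of_nat D :]))"

lemma poly_Qp: "poly (Qp a D z) x = (\<Sum>js\<in>tups a D. z ^ wsum a js *
   poly (Pr (length a)) ((x - of_nat (wsum a js)) / of_nat D)) / (of_nat D * fact (length a - 1))"
  by (simp add: Qp_def poly_sum poly_pcompose diff_divide_distrib)

lemma inv_pow_root:
  assumes "D > 0" "z ^ D = (1::complex)"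
  shows "inverse z ^ n = z ^ ((D-1)*n)"
proof -
  have "z ^ n * z ^ ((D-1)*n) = z ^ (D*n)" using assms(1)
    by (simp add: power_add[symmetric]) (cases D; simp add: algebra_simps)
  also have "\<dots> = 1" using assms by (simp add: power_mult)
  finally show ?thesis by (simp add: power_inverse inverse_unique)
qed

lemma wsum_lt:
  assumes pos: "\<forall>x\<in>set a. x > 0" and dv: "\<forall>x\<in>set a. x dvd D" and r: "length a \<ge> 1"
    and js: "js \<in> tups a D"
  shows "wsum a js < length a * D"
proof -
  have "wsum a js = (\<Sum>i<length a. a!i * js!i)" by (simp add: wsum_def)
  also have "\<dots> < (\<Sum>i<length a. D)"
  proof (rule sum_strict_mono)
    fix i assume i: "i \<in> {..<length a}"
    have ai: "a!i > 0" "a!i dvd D" using pos dv i by auto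
    have "js!i < D div a!i" using js i by (auto simp: tups_def)
    hence "a!i * js!i < a!i * (D div a!i)" by (rule mult_strict_left_mono) (use ai in auto)
    also have "\<dots> = D" using ai by simp
    finally show "a!i * js!i < D" .
  qed (use r in \<open>auto simp: lessThan_empty_iff\<close>)
  finally show ?thesis by simp
qed

lemma existence:
  assumes pos: "\<forall>x\<in>set a. x > 0" and dv: "\<forall>x\<in>set a. x dvd D" and r: "length a \<ge> 1"
    and D: "D > 0"
  shows "of_nat (restricted_partition a n) =
    (\<Sum>z\<in>{z::complex. z ^ D = 1}. poly (Qp a D z) (of_nat n) * inverse z ^ n)"
proof -
  define U where "U = {z::complex. z ^ D = 1}"
  define c where "c = of_nat D * (fact (length a - 1) :: complex)"
  define F where "F js = poly (Pr (length a)) ((of_nat n - of_nat (wsum a js)) / of_nat D)" for js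
  have "restricted_partition a n = card {x. length x = length a \<and> wsum a x = n}"
    by (simp add: restricted_partition_def wsum_def)
  also have "\<dots> = (\<Sum>js\<in>tups a D. card (bset a D js n))" by (rule count[OF pos dv D])
  finally have "(of_nat (restricted_partition a n) :: complex) =
     (\<Sum>js\<in>tups a D. of_nat (card (bset a D js n)))" by simp
  also have "\<dots> = (\<Sum>js\<in>tups a D. (\<Sum>z\<in>U. z ^ wsum a js * inverse z ^ n) * F js / c)"
  proof (intro sum.cong refl)
    fix js assume js: "js \<in> tups a D"
    have "(\<Sum>z\<in>U. z ^ wsum a js * inverse z ^ n) = (\<Sum>z\<in>U. z ^ (wsum a js + (D-1)*n))"
      by (intro sum.cong refl) (simp add: U_def inv_pow_root[OF D] power_add)
    also have "\<dots> = (if D dvd (wsum a js + (D-1)*n) then of_nat D else 0)"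
      unfolding U_def by (rule rootsum[OF D])
    finally show "of_nat (card (bset a D js n)) = (\<Sum>z\<in>U. z ^ wsum a js * inverse z ^ n) * F js / c"
      unfolding card_bset[OF D] c_def F_def
      using term_eq[OF D r wsum_lt[OF pos dv r js], of n] by simp
  qed
  also have "\<dots> = (\<Sum>js\<in>tups a D. \<Sum>z\<in>U. z ^ wsum a js * F js / c * inverse z ^ n)"
    by (intro sum.cong refl) (simp add: sum_distrib_right sum_distrib_left sum_divide_distrib mult_ac)
  also have "\<dots> = (\<Sum>z\<in>U. \<Sum>js\<in>tups a D. z ^ wsum a js * F js / c * inverse z ^ n)"
    by (rule sum.swap)
  also have "\<dots> = (\<Sum>z\<in>U. (\<Sum>js\<in>tups a D. z ^ wsum a js * F js) / c * inverse z ^ n)"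
    by (simp add: sum_divide_distrib sum_distrib_right)
  also have "\<dots> = (\<Sum>z\<in>U. poly (Qp a D z) (of_nat n) * inverse z ^ n)"
    by (simp add: poly_Qp F_def c_def)
  finally show ?thesis by (simp add: U_def)
qed

lemma coeff_prod_lin:
  assumes "finite A"
  shows "coeff (\<Prod>i\<in>A. [:of_nat i, 1:] :: complex poly) k = of_int (coeff (\<Prod>i\<in>A. [:int i, 1:]) k)"
  using assms
proof (induction A arbitrary: k rule: finite_induct)
  case empty thus ?case by (cases k) auto
next
  case (insert x A)
  show ?case using insert by (cases k) (simp_all add: mult_pCons_left)
qed

lemma poly_Pr_sum:
  assumes r: "r \<ge> 1"
  shows "poly (Pr r) y = (\<Sum>k=0..r-1. of_int (stirl r k) * y ^ k)"
proof -
  have deg: "degree (Pr r) \<le> r - 1"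
  proof -
    have "degree (Pr r) \<le> sum (degree \<circ> (\<lambda>i. [:of_nat i, 1:] :: complex poly)) {1..<r}"
      unfolding Pr_def by (rule degree_prod_sum_le) simp
    also have "\<dots> = r - 1" by simp
    finally show ?thesis .
  qed
  have "poly (Pr r) y = (\<Sum>k\<le>degree (Pr r). coeff (Pr r) k * y ^ k)" by (rule poly_altdef)
  also have "\<dots> = (\<Sum>k=0..r-1. coeff (Pr r) k * y ^ k)"
    by (rule sum.mono_neutral_left) (use deg in \<open>auto simp: coeff_eq_0\<close>)
  also have "\<dots> = (\<Sum>k=0..r-1. of_int (stirl r k) * y ^ k)"
    by (intro sum.cong refl) (simp add: Pr_def stirl_def coeff_prod_lin)
  finally show ?thesis .
qed

lemma tri:
  fixes c :: "nat \<Rightarrow> complex" and x y d :: complex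
  assumes r: "r \<ge> 1"
  shows "(\<Sum>m=1..r. \<Sum>k=m-1..r-1. c k * (-1) ^ (k + 1 - m) * of_nat (k choose (m - 1)) *
            (d ^ k * y ^ (k + 1 - m) * x ^ (m - 1)))
       = (\<Sum>k=0..r-1. c k * (d * (x - y)) ^ k)"
proof -
  define g where "g m k = c k * (-1) ^ (k + 1 - m) * of_nat (k choose (m - 1)) *
            (d ^ k * y ^ (k + 1 - m) * x ^ (m - 1))" for m k
  have "(\<Sum>m=1..r. \<Sum>k=m-1..r-1. g m k) = (\<Sum>m=1..r. \<Sum>k=0..r-1. if m - 1 \<le> k then g m k else 0)"
  proof (rule sum.cong[OF refl])
    fix m assume "m \<in> {1..r}"
    have e: "{k\<in>{0..r-1}. m - 1 \<le> k} = {m-1..r-1}" by auto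
    have "(\<Sum>k=0..r-1. if m - 1 \<le> k then g m k else 0) = sum (g m) {k\<in>{0..r-1}. m - 1 \<le> k}"
      by (rule sum.inter_filter[symmetric]) simp
    thus "(\<Sum>k=m-1..r-1. g m k) = (\<Sum>k=0..r-1. if m - 1 \<le> k then g m k else 0)"
      using e by simp
  qed
  also have "\<dots> = (\<Sum>k=0..r-1. \<Sum>m=1..r. if m - 1 \<le> k then g m k else 0)" by (rule sum.swap)
  also have "\<dots> = (\<Sum>k=0..r-1. c k * (d * (x - y)) ^ k)"
  proof (rule sum.cong[OF refl])
    fix k assume k: "k \<in> {0..r-1}"
    have e: "{m\<in>{1..r}. m - 1 \<le> k} = {Suc 0..Suc k}" using k r by auto
    have "(\<Sum>m=1..r. if m - 1 \<le> k then g m k else 0) = sum (\<lambda>m. g m k) {m\<in>{1..r}. m - 1 \<le> k}"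
      by (rule sum.inter_filter[symmetric]) simp
    hence "(\<Sum>m=1..r. if m - 1 \<le> k then g m k else 0) = (\<Sum>m=Suc 0..Suc k. g m k)"
      by (simp only: e)
    also have "\<dots> = (\<Sum>i=0..k. g (Suc i) k)" by (rule sum.shift_bounds_cl_Suc_ivl)
    also have "\<dots> = c k * d ^ k * (\<Sum>i\<le>k. of_nat (k choose i) * x ^ i * (- y) ^ (k - i))"
      by (simp add: g_def sum_distrib_left atLeast0AtMost power_minus' power_mult_distrib mult_ac
          flip: power_minus)
    also have "\<dots> = c k * (d * (x - y)) ^ k"
      by (simp add: binomial_ring[symmetric] power_mult_distrib)
    finally show "(\<Sum>m=1..r. if m - 1 \<le> k then g m k else 0) = c k * (d * (x - y)) ^ k" .
  qed
  finally show ?thesis by (simp add: g_def)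
qed
lemma partition_sum:
  fixes h :: "'b \<Rightarrow> nat"
  assumes j: "j \<ge> 1" and T: "finite T"
  shows "(\<Sum>l=1..j. \<Sum>js\<in>{js\<in>T. h js mod j = l mod j}. f js) = (\<Sum>js\<in>T. f js)"
proof -
  define g where "g js = (if h js mod j = 0 then j else h js mod j)" for js
  have sub: "g ` T \<subseteq> {1..j}" using j by (auto simp: g_def)
  have "(\<Sum>l=1..j. \<Sum>js\<in>{js\<in>T. h js mod j = l mod j}. f js) = (\<Sum>l=1..j. sum f {js\<in>T. g js = l})"
  proof (rule sum.cong[OF refl])
    fix l assume l: "l \<in> {1..j}"
    have "{js\<in>T. h js mod j = l mod j} = {js\<in>T. g js = l}"
    proof (cases "l = j")
      case True thus ?thesis using j by (auto simp: g_def dest: sym) (metis mod_less_divisor less_irrefl not_less_eq_eq neq0_conv le_0_eq)+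
    next
      case False
      hence "l < j" "l \<noteq> 0" using l by auto
      thus ?thesis using j by (auto simp: g_def)
    qed
    thus "(\<Sum>js\<in>{js\<in>T. h js mod j = l mod j}. f js) = sum f {js\<in>T. g js = l}" by simp
  qed
  also have "\<dots> = sum f T" by (rule sum.group[OF T _ sub]) simp
  finally show ?thesis .
qed

lemma rho_cis: "rho j = cis (2*pi/real j)"
  unfolding rho_def cis_conv_exp by (simp add: field_simps)

lemma rho_pow:
  assumes "j \<ge> 1" "j dvd k"
  shows "rho j ^ k = 1"
proof -
  obtain t where t: "k = j * t" using assms by blast
  have "rho j ^ k = cis (2 * pi * real t)"
    using assms(1) by (simp add: rho_cis DeMoivre t field_simps)
  also have "\<dots> = 1" by (intro cis_multiple_2pi) auto
  finally show ?thesis .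
qed

lemma rho_mod:
  assumes "j \<ge> 1" "s mod j = l mod j"
  shows "rho j ^ s = rho j ^ l"
proof -
  have one: "rho j ^ (j * q) = 1" for q by (rule rho_pow[OF assms(1)]) simp
  have "rho j ^ s = rho j ^ (j * (s div j)) * rho j ^ (s mod j)"
    by (metis mult_div_mod_eq power_add)
  also have "rho j ^ l = rho j ^ (j * (l div j)) * rho j ^ (l mod j)"
    by (metis mult_div_mod_eq power_add)
  ultimately show ?thesis using assms(2) one by simp
qed

lemma wave_tuples_eq: "wave_tuples a D j l = {js\<in>tups a D. wsum a js mod j = l mod j}"
  by (auto simp: wave_tuples_def tups_def wsum_def)

lemma sylvester_polys_eq:
  assumes pos: "\<forall>x\<in>set a. x > 0" and dv: "\<forall>x\<in>set a. x dvd D" and r: "length a \<ge> 1"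
    and D: "D > 0"
  shows "sylvester_polys a D = (\<lambda>z. if z ^ D = 1 then Qp a D z else 0)"
proof -
  have ex: "of_nat (restricted_partition a n) =
    (\<Sum>z\<in>{z::complex. z ^ D = 1}. poly (if z ^ D = 1 then Qp a D z else 0) (of_nat n) * inverse z ^ n)" for n
    unfolding existence[OF pos dv r D] by (intro sum.cong refl) simp
  show ?thesis
    unfolding sylvester_polys_def
  proof (rule the_equality)
    show "(\<forall>z. z ^ D \<noteq> 1 \<longrightarrow> (if z ^ D = 1 then Qp a D z else 0) = 0) \<and>
      (\<forall>n. of_nat (restricted_partition a n) =
        (\<Sum>z\<in>{z. z ^ D = 1}. poly (if z ^ D = 1 then Qp a D z else 0) (of_nat n) * inverse z ^ n))"
      using ex by simp
  next
    fix P assume P: "(\<forall>z. z ^ D \<noteq> 1 \<longrightarrow> P z = 0) \<and>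
      (\<forall>n. of_nat (restricted_partition a n) =
        (\<Sum>z\<in>{z::complex. z ^ D = 1}. poly (P z) (of_nat n) * inverse z ^ n))"
    show "P = (\<lambda>z. if z ^ D = 1 then Qp a D z else 0)"
      by (rule uniq[OF D]) (use P ex in auto)
  qed
qed

theorem proposition4p2_wsum:
  fixes a :: "nat list" and D j n :: nat
  assumes r: "length a \<ge> 1"
    and pos: "\<forall>x\<in>set a. x > 0"
    and D: "D > 0" and dv: "\<forall>x\<in>set a. x dvd D"
    and j: "j \<ge> 1" and jd: "\<exists>x\<in>set a. j dvd x"
  shows "sylvester_wave a D j n =
    inverse (rho j) ^ n / (of_nat D * fact (length a - 1)) *
    (\<Sum>m=1..length a. \<Sum>l=1..j. rho j ^ l *
      (\<Sum>k=m-1..length a - 1. of_int (stirl (length a) k) * (-1) ^ (k + 1 - m) *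
         of_nat (k choose (m - 1)) *
         (\<Sum>js\<in>wave_tuples a D j l.
            inverse (of_nat D) ^ k * of_nat (wsum a js) ^ (k + 1 - m) *
            of_nat n ^ (m - 1))))"
proof -
  define r where "r = length a"
  define \<rho> where "\<rho> = rho j"
  define c where "c k = (of_int (stirl r k) :: complex)" for k
  define G where "G m k js = c k * (-1) ^ (k + 1 - m) * of_nat (k choose (m - 1)) *
      (inverse (of_nat D) ^ k * of_nat (wsum a js) ^ (k + 1 - m) * of_nat n ^ (m - 1))" for m k js
  have rD: "\<rho> ^ D = 1"
  proof -
    obtain x where "x \<in> set a" "j dvd x" using jd by blast
    hence "j dvd D" using dv by (meson dvd_trans)
    thus ?thesis unfolding \<rho>_def using j by (rule rho_pow[rotated])
  qed
  have finT: "finite (tups a D)"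
  proof (rule finite_subset)
    show "tups a D \<subseteq> {xs. set xs \<subseteq> {..<D} \<and> length xs = length a}"
    proof
      fix js assume js: "js \<in> tups a D"
      have "set js \<subseteq> {..<D}"
      proof
        fix x assume "x \<in> set js"
        then obtain i where i: "i < length a" "x = js!i" using js by (auto simp: tups_def in_set_conv_nth)
        have "x < D div a!i" using js i by (auto simp: tups_def)
        also have "\<dots> \<le> D" by (rule div_le_dividend)
        finally show "x \<in> {..<D}" by simp
      qed
      thus "js \<in> {xs. set xs \<subseteq> {..<D} \<and> length xs = length a}" using js by (simp add: tups_def)
    qed
  qed (rule finite_lists_length_eq, simp)
  have F: "poly (Pr r) ((of_nat n - of_nat (wsum a js)) / of_nat D) =
      (\<Sum>m=1..r. \<Sum>k=m-1..r-1. G m k js)" for js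
  proof -
    have "poly (Pr r) ((of_nat n - of_nat (wsum a js)) / of_nat D) =
        (\<Sum>k=0..r-1. c k * (inverse (of_nat D) * (of_nat n - of_nat (wsum a js))) ^ k)"
      unfolding poly_Pr_sum[OF r[folded r_def]] c_def by (simp add: field_simps)
    also have "\<dots> = (\<Sum>m=1..r. \<Sum>k=m-1..r-1. G m k js)"
      unfolding G_def by (rule tri[OF r[folded r_def], symmetric])
    finally show ?thesis .
  qed
  have "sylvester_wave a D j n = poly (Qp a D \<rho>) (of_nat n) * inverse \<rho> ^ n"
    unfolding sylvester_wave_def sylvester_polys_eq[OF pos dv r D] using rD by (simp add: \<rho>_def)
  also have "poly (Qp a D \<rho>) (of_nat n) =
      (\<Sum>js\<in>tups a D. \<rho> ^ wsum a js * (\<Sum>m=1..r. \<Sum>k=m-1..r-1. G m k js)) / (of_nat D * fact (r - 1))"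
    unfolding poly_Qp r_def[symmetric] F ..
  also have "(\<Sum>js\<in>tups a D. \<rho> ^ wsum a js * (\<Sum>m=1..r. \<Sum>k=m-1..r-1. G m k js)) =
      (\<Sum>m=1..r. \<Sum>js\<in>tups a D. \<rho> ^ wsum a js * (\<Sum>k=m-1..r-1. G m k js))"
    by (subst sum.swap) (simp add: sum_distrib_left)
  also have "\<dots> = (\<Sum>m=1..r. \<Sum>l=1..j. \<Sum>js\<in>wave_tuples a D j l. \<rho> ^ wsum a js * (\<Sum>k=m-1..r-1. G m k js))"
    unfolding wave_tuples_eq by (intro sum.cong refl partition_sum[symmetric] j finT)
  also have "\<dots> = (\<Sum>m=1..r. \<Sum>l=1..j. \<rho> ^ l *
      (\<Sum>k=m-1..r-1. c k * (-1) ^ (k + 1 - m) * of_nat (k choose (m - 1)) *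
         (\<Sum>js\<in>wave_tuples a D j l.
            inverse (of_nat D) ^ k * of_nat (wsum a js) ^ (k + 1 - m) * of_nat n ^ (m - 1))))"
  proof (intro sum.cong refl)
    fix m l
    have "(\<Sum>js\<in>wave_tuples a D j l. \<rho> ^ wsum a js * (\<Sum>k=m-1..r-1. G m k js)) =
          (\<Sum>js\<in>wave_tuples a D j l. \<rho> ^ l * (\<Sum>k=m-1..r-1. G m k js))"
      by (intro sum.cong refl) (auto simp: wave_tuples_eq \<rho>_def intro!: rho_mod j)
    also have "\<dots> = \<rho> ^ l * (\<Sum>k=m-1..r-1. \<Sum>js\<in>wave_tuples a D j l. G m k js)"
      by (subst sum.swap) (simp add: sum_distrib_left)
    also have "\<dots> = \<rho> ^ l * (\<Sum>k=m-1..r-1. c k * (-1) ^ (k + 1 - m) * of_nat (k choose (m - 1)) *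
         (\<Sum>js\<in>wave_tuples a D j l.
            inverse (of_nat D) ^ k * of_nat (wsum a js) ^ (k + 1 - m) * of_nat n ^ (m - 1)))"
      by (simp add: G_def sum_distrib_left)
    finally show "(\<Sum>js\<in>wave_tuples a D j l. \<rho> ^ wsum a js * (\<Sum>k=m-1..r-1. G m k js)) = \<dots>" .
  qed
  finally show ?thesis by (simp add: r_def \<rho>_def c_def mult_ac)
qed

theorem proposition4p2:
  fixes a :: "nat list" and D j n :: nat
  assumes "length a \<ge> 1"
    and "\<forall>x\<in>set a. x > 0"
    and "D > 0" and "\<forall>x\<in>set a. x dvd D"
    and "j \<ge> 1" and "\<exists>x\<in>set a. j dvd x"
  shows "sylvester_wave a D j n =
    inverse (rho j) ^ n / (of_nat D * fact (length a - 1)) *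
    (\<Sum>m=1..length a. \<Sum>l=1..j. rho j ^ l *
      (\<Sum>k=m-1..length a - 1. of_int (stirl (length a) k) * (-1) ^ (k + 1 - m) *
         of_nat (k choose (m - 1)) *
         (\<Sum>js\<in>wave_tuples a D j l.
            inverse (of_nat D) ^ k * of_nat (\<Sum>i<length a. a ! i * js ! i) ^ (k + 1 - m) *
            of_nat n ^ (m - 1))))"
  using proposition4p2_wsum[OF assms, of n] unfolding wsum_def .
end
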